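(* For any $n\ge2$ and $A>0$, there exists $f\in C^2[-1,1]$ with $f\le0$ on $[-1,0]$ and $f\ge0$ on $[0,1]$, such that every algebraic polynomial $P_n$ of degree $\le n$ with $P_n\le0$ on $[-1,0]$, $P_n\ge0$ on $[0,1]$ and $P_n^{(i)}(0)=f^{(i)}(0)$ for $0\le i\le2$ obeys $$\|f-P_n\|>A\,\|f''\|.$$
   Context: $\|\cdot\|$ is the sup norm on $[-1,1]$. *)

theory Defs
  imports "HOL-Analysis.Analysis" "HOL-Computational_Algebra.Polynomial"
begin

definition supnorm :: "(real \<Rightarrow> real) \<Rightarrow> real" where
  "supnorm g = (SUP x\<in>{-1..1}. \<bar>g x\<bar>)"

definition C2_on_interval :: "(real \<Rightarrow> real) \<Rightarrow> (real \<Rightarrow> real) \<Rightarrow> (real \<Rightarrow> real) \<Rightarrow> bool" where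
  "C2_on_interval f f1 f2 \<longleftrightarrow>
     (\<forall>x\<in>{-1..1}. (f has_real_derivative f1 x) (at x within {-1..1})) \<and>
     (\<forall>x\<in>{-1..1}. (f1 has_real_derivative f2 x) (at x within {-1..1})) \<and>
     continuous_on {-1..1} f2"

end

theory Submission
  imports Defs
begin



lemma deg_diff:
  fixes R :: "real poly"
  assumes "degree R \<le> Suc k"
  shows "degree (R \<circ>\<^sub>p [:h,1:] - R) \<le> k"
proof -
  have d1: "degree (R \<circ>\<^sub>p [:h,1:]) = degree R" by (simp add: degree_pcompose)
  have "degree (R \<circ>\<^sub>p [:h,1:] - R) \<le> Suc k"
    using degree_diff_le[of "R \<circ>\<^sub>p [:h,1:]" "Suc k" R] d1 assms by simp
  moreover have "coeff (R \<circ>\<^sub>p [:h,1:] - R) (Suc k) = 0"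
  proof (cases "degree R = Suc k")
    case True
    have "lead_coeff (R \<circ>\<^sub>p [:h,1:]) = lead_coeff R * lead_coeff [:h,1:] ^ degree R"
      by (rule lead_coeff_comp) simp
    then show ?thesis using True d1 by simp
  next
    case False
    then have "degree R < Suc k" using assms by simp
    then show ?thesis using d1 by (simp add: coeff_eq_0)
  qed
  ultimately show ?thesis
  proof (intro degree_le allI impI)
    fix i assume "degree (R \<circ>\<^sub>p [:h,1:] - R) \<le> Suc k" "coeff (R \<circ>\<^sub>p [:h,1:] - R) (Suc k) = 0" "k < i"
    then show "coeff (R \<circ>\<^sub>p [:h,1:] - R) i = 0"
    proof (cases "i = Suc k")
      case False
      with \<open>k < i\<close> have "Suc k < i" by simp
      with \<open>degree (R \<circ>\<^sub>p [:h,1:] - R) \<le> Suc k\<close> show ?thesis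
        by (intro coeff_eq_0) simp
    qed (use \<open>coeff (R \<circ>\<^sub>p [:h,1:] - R) (Suc k) = 0\<close> in simp)
  qed
qed

lemma fd_bound:
  fixes R :: "real poly"
  assumes "degree R \<le> k" "\<forall>j\<in>{1..k+1}. \<bar>poly R (a + real j * h)\<bar> \<le> M"
  shows "\<bar>poly R a\<bar> \<le> (2^(k+1) - 1) * M"
  using assms
proof (induction k arbitrary: R M)
  case 0
  then obtain c where "R = [:c:]" using degree0_coeffs by auto
  then show ?case using 0(2) by force
next
  case (Suc k)
  define Q where "Q = R \<circ>\<^sub>p [:h,1:] - R"
  have pQ: "poly Q x = poly R (x + h) - poly R x" for x
    unfolding Q_def by (simp add: poly_pcompose add.commute)
  have dQ: "degree Q \<le> k" unfolding Q_def using deg_diff Suc.prems(1) by blast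
  have "\<forall>j\<in>{1..k+1}. \<bar>poly Q (a + real j * h)\<bar> \<le> 2 * M"
  proof
    fix j assume j: "j \<in> {1..k+1}"
    have "\<bar>poly R (a + real (j+1) * h)\<bar> \<le> M" using j by (intro Suc.prems(2)[rule_format]) auto
    moreover have "\<bar>poly R (a + real j * h)\<bar> \<le> M" using Suc.prems(2) j by auto
    ultimately show "\<bar>poly Q (a + real j * h)\<bar> \<le> 2 * M"
      unfolding pQ by (simp add: algebra_simps)
  qed
  from Suc.IH[OF dQ this] have "\<bar>poly Q a\<bar> \<le> (2 ^ (k + 1) - 1) * (2 * M)" .
  moreover have "\<bar>poly R (a + h)\<bar> \<le> M" using Suc.prems(2)[rule_format, of 1] by simp
  ultimately show ?case using pQ[of a] by (simp add: algebra_simps)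
qed



lemma f2_bound:
  fixes e x :: real assumes "e > 0"
  shows "\<bar>e^4 * (e^2 - 3*x^2) / (e^2+x^2)^3\<bar> \<le> 1"
proof -
  define a where "a = e^2"
  define u where "u = x^2"
  have a: "a > 0" using assms by (simp add: a_def)
  have u: "u \<ge> 0" by (simp add: u_def)
  have pos: "(a+u)^3 > 0" using a u by simp
  have e4: "e^4 = a^2" by (simp add: a_def power_mult[symmetric])
  have "\<bar>a^2 * (a - 3*u)\<bar> \<le> (a+u)^3"
  proof -
    have ex: "(a+u)^3 = a^3 + 3*a^2*u + 3*a*u^2 + u^3" by (simp add: power3_eq_cube power2_eq_square algebra_simps)
    have "a*u^2 \<ge> 0" "u^3 \<ge> 0" "a^2*u \<ge> 0" using a u by simp_all
    moreover have "a^2 * (a - 3*u) = a^3 - 3*a^2*u" by (simp add: power3_eq_cube power2_eq_square algebra_simps)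
    moreover have "a^3 > 0" using a by simp
    ultimately show ?thesis using ex a u
      by (simp only: abs_le_iff) linarith
  qed
  then have "\<bar>a^2 * (a - 3*u)\<bar> / (a+u)^3 \<le> 1" using pos by (simp add: divide_le_eq_1)
  moreover have "\<bar>e^4 * (e^2 - 3*x^2) / (e^2+x^2)^3\<bar> = \<bar>a^2 * (a - 3*u)\<bar> / (a+u)^3"
    using pos unfolding e4 by (simp add: a_def u_def abs_divide)
  ultimately show ?thesis by simp
qed

theorem lemma3p12:
  fixes n :: nat and A :: real
  assumes "n \<ge> 2" and "A > 0"
  shows "\<exists>f f1 f2. C2_on_interval f f1 f2 \<and>
           (\<forall>x\<in>{-1..0}. f x \<le> 0) \<and> (\<forall>x\<in>{0..1}. f x \<ge> 0) \<and>
           (\<forall>P :: real poly. degree P \<le> n \<and>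
              (\<forall>x\<in>{-1..0}. poly P x \<le> 0) \<and> (\<forall>x\<in>{0..1}. poly P x \<ge> 0) \<and>
              poly P 0 = f 0 \<and> poly (pderiv P) 0 = f1 0 \<and>
              poly (pderiv (pderiv P)) 0 = f2 0
              \<longrightarrow> supnorm (\<lambda>x. f x - poly P x) > A * supnorm f2)"
proof -
  define K :: real where "K = 8 * (2^(n+1) - 1) * (real n + 1)^3"
  have "(2::real) \<le> 2^(n+1)" using power_increasing[of 1 "n+1" "2::real"] by simp
  then have "(2::real)^(n+1) - 1 > 0" by linarith
  then have K: "K > 0" unfolding K_def by (intro mult_pos_pos) auto
  define e :: real where "e = min (1/(8*(real n+1))) (1/(16*K*(A+1)))"
  have e0: "e > 0" using K assms(2) unfolding e_def by simp
  have e1: "e \<le> 1/(8*(real n+1))" unfolding e_def by simp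
  have e2: "e \<le> 1/(16*K*(A+1))" unfolding e_def by simp
  have ee: "e^2 + x^2 > 0" for x using e0 by (simp add: add_pos_nonneg)
  have nzz: "e^2 + x^2 \<noteq> 0" for x using ee[of x] by linarith
  have nz2: "2*e^2 + 2*x^2 \<noteq> 0" for x using ee[of x] by linarith
  define f where "f = (\<lambda>x::real. e*x + e^2*x^2/(2*(e^2+x^2)))"
  define f1 where "f1 = (\<lambda>x::real. e + e^4*x/(e^2+x^2)^2)"
  define f2 where "f2 = (\<lambda>x::real. e^4 * (e^2 - 3*x^2) / (e^2+x^2)^3)"
  have df: "(f has_real_derivative f1 x) (at x)" for x
  proof -
    have "(f has_real_derivative (e + (e^2*(2*x)*(2*(e^2+x^2)) - e^2*x^2*(2*(2*x)))/(2*(e^2+x^2))^2)) (at x)"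
      unfolding f_def using ee[of x]
      by (auto intro!: derivative_eq_intros simp: power2_eq_square algebra_simps)
    moreover have "(e + (e^2*(2*x)*(2*(e^2+x^2)) - e^2*x^2*(2*(2*x)))/(2*(e^2+x^2))^2) = f1 x"
    proof -
      have n: "e^2*(2*x)*(2*(e^2+x^2)) - e^2*x^2*(2*(2*x)) = 4*(e^4*x)"
        by (simp add: algebra_simps power2_eq_square power4_eq_xxxx)
      have d: "(2*(e^2+x^2))^2 = 4*(e^2+x^2)^2" by (simp only: power_mult_distrib) simp
      show ?thesis unfolding n d f1_def by simp
    qed
    ultimately show ?thesis by simp
  qed
  have df1: "(f1 has_real_derivative f2 x) (at x)" for x
  proof -
    have "(f1 has_real_derivative (0 + (e^4*1*(e^2+x^2)^2 - e^4*x*(2*(e^2+x^2)*(2*x)))/((e^2+x^2)^2)^2)) (at x)"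
      unfolding f1_def using ee[of x] mult_pos_pos[OF ee[of x] ee[of x]]
      by (auto intro!: derivative_eq_intros simp: power2_eq_square algebra_simps)
    moreover have "(0 + (e^4*1*(e^2+x^2)^2 - e^4*x*(2*(e^2+x^2)*(2*x)))/((e^2+x^2)^2)^2) = f2 x"
    proof -
      have n: "e^4*1*(e^2+x^2)^2 - e^4*x*(2*(e^2+x^2)*(2*x)) = (e^2+x^2) * (e^4 * (e^2 - 3*x^2))"
        by (simp add: algebra_simps power2_eq_square power4_eq_xxxx)
      have d: "((e^2+x^2)^2)^2 = (e^2+x^2) * (e^2+x^2)^3" by (simp add: power2_eq_square power3_eq_cube)
      have nz: "e^2+x^2 \<noteq> 0" using ee[of x] by linarith
      show ?thesis unfolding n d f2_def using nz by simp
    qed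
    ultimately show ?thesis by simp
  qed
  have cf2: "continuous_on {-1..1} f2"
    unfolding f2_def using ee by (intro continuous_intros) (auto simp: nzz nz2)
  have C2: "C2_on_interval f f1 f2"
    unfolding C2_on_interval_def using df df1 cf2 by (auto intro: has_field_derivative_at_within)
  have fx: "f x = e*x + e^2*x^2/(2*(e^2+x^2))" for x unfolding f_def by simp
  have key: "e^2*x^2/(2*(e^2+x^2)) \<le> e*\<bar>x\<bar>" for x
  proof -
    have "e^2*x^2 \<le> e*\<bar>x\<bar>*(2*(e^2+x^2))"
    proof -
      have "e * \<bar>x\<bar> \<le> 2*(e^2+x^2)"
      proof -
        have "0 \<le> (e - \<bar>x\<bar>)^2" by simp
        then have "2*(e*\<bar>x\<bar>) \<le> e^2 + x^2" by (simp add: power2_diff power2_abs)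
        then show ?thesis using ee[of x] by (smt (verit))
      qed
      then have "(e*\<bar>x\<bar>)*(e*\<bar>x\<bar>) \<le> (e*\<bar>x\<bar>)*(2*(e^2+x^2))"
        using e0 by (intro mult_left_mono) auto
      then show ?thesis by (simp add: power2_eq_square algebra_simps)
    qed
    then show ?thesis using ee[of x] by (simp add: divide_le_eq)
  qed
  have fneg: "\<forall>x\<in>{-1..0}. f x \<le> 0"
  proof
    fix x :: real assume "x \<in> {-1..0}"
    then have "\<bar>x\<bar> = -x" by auto
    then show "f x \<le> 0" using key[of x] unfolding fx by simp
  qed
  have fpos: "\<forall>x\<in>{0..1}. f x \<ge> 0"
  proof
    fix x :: real assume "x \<in> {0..1}"
    then show "f x \<ge> 0" unfolding fx using e0 ee[of x] by (auto intro!: add_nonneg_nonneg)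
  qed
  have f2b: "supnorm f2 \<le> 1"
    unfolding supnorm_def f2_def using f2_bound[OF e0] by (intro cSUP_least) auto
  have fdev: "\<bar>f y - e*y - y^2/2\<bar> \<le> 1/2" if "\<bar>y\<bar> \<le> 1" for y
  proof -
    have "y^2 \<le> 1" using that by (simp add: abs_square_le_1)
    moreover have "e^2*y^2/(2*(e^2+y^2)) \<le> y^2/2"
      using ee[of y] by (simp add: divide_le_eq field_simps)
    moreover have "e^2*y^2/(2*(e^2+y^2)) \<ge> 0" using ee[of y] by simp
    ultimately show ?thesis unfolding fx by (simp only: abs_le_iff) linarith
  qed
  have cf: "continuous_on {-1..1} f"
    unfolding f_def using ee by (intro continuous_intros) (auto simp: nzz nz2)
  have main: "supnorm (\<lambda>x. f x - poly P x) > A * supnorm f2"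
    if P: "degree P \<le> n" "\<forall>x\<in>{-1..0}. poly P x \<le> 0" "poly P 0 = f 0"
          "poly (pderiv P) 0 = f1 0" "poly (pderiv (pderiv P)) 0 = f2 0" for P
  proof -
    define D where "D = supnorm (\<lambda>x. f x - poly P x)"
    have cg: "continuous_on {-1..1} (\<lambda>x. \<bar>f x - poly P x\<bar>)"
      using cf by (intro continuous_intros)
    have bdd: "bdd_above ((\<lambda>x. \<bar>f x - poly P x\<bar>) ` {-1..1})"
      using compact_continuous_image[OF cg compact_Icc] by (intro bounded_imp_bdd_above compact_imp_bounded)
    have Dle: "\<bar>f y - poly P y\<bar> \<le> D" if "y \<in> {-1..1}" for y
      unfolding D_def supnorm_def using bdd that by (rule cSUP_upper2) simp
    obtain a0 P1 where P1: "P = pCons a0 P1" by (rule pCons_cases)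
    obtain a1 P2 where P2: "P1 = pCons a1 P2" by (rule pCons_cases)
    obtain a2 R where P3: "P2 = pCons a2 R" by (rule pCons_cases)
    have polyP: "poly P x = a0 + x*a1 + x^2*a2 + x^3 * poly R x" for x
      unfolding P1 P2 P3 by (simp add: algebra_simps power2_eq_square power3_eq_cube)
    have degR: "degree R \<le> n"
    proof -
      have "degree R \<le> degree P2" "degree P2 \<le> degree P1" "degree P1 \<le> degree P"
        unfolding P1 P2 P3 by (auto simp: degree_pCons_eq_if)
      then show ?thesis using P(1) by simp
    qed
    have "poly P 0 = a0" by (simp add: polyP)
    then have a0: "a0 = 0" using P(3) unfolding f_def by simp
    have "poly (pderiv P) 0 = coeff P 1" by (simp add: poly_0_coeff_0 coeff_pderiv)
    then have a1: "a1 = e" using P(4) unfolding f1_def P1 P2 P3 by simp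
    have "poly (pderiv (pderiv P)) 0 = 2 * coeff P 2" by (simp add: poly_0_coeff_0 coeff_pderiv numeral_2_eq_2)
    then have a2: "a2 = 1/2" using P(5) unfolding f2_def P1 P2 P3 using e0 by (simp add: numeral_2_eq_2 power4_eq_xxxx power3_eq_cube power2_eq_square)
    have polyP': "poly P x = e*x + x^2/2 + x^3 * poly R x" for x
      using polyP[of x] a0 a1 a2 by simp
    define x0 where "x0 = -4*e"
    define h where "h = 1/(real n + 1)"
    have h0: "h > 0" unfolding h_def by simp
    have e1': "8*e \<le> h" using e1 e0 unfolding h_def by (simp add: field_simps)
    have h1: "h \<le> 1" unfolding h_def by (simp add: field_simps)
    have x0in: "x0 \<in> {-1..0}" using e1' e0 h0 h1 unfolding x0_def by auto
    have "poly P x0 \<le> 0" using P(2) x0in by blast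
    then have "4*e^2 - 64*e^3 * poly R x0 \<le> 0"
      unfolding polyP' x0_def by (simp add: power2_eq_square power3_eq_cube algebra_simps)
    then have "4*e^2 \<le> 64*e^3 * poly R x0" by simp
    then have "4*e^2 \<le> (16*e) * (4 * e^2) * poly R x0" by (simp add: power2_eq_square power3_eq_cube algebra_simps)
    then have Rx0: "1 \<le> (16*e) * poly R x0" using e0 
      by (smt (verit) mult.commute mult.left_commute mult_le_cancel_left1 zero_less_power)
    define M where "M = 8*(real n + 1)^3 * (D + 1/2)"
    have Mb: "\<forall>j\<in>{1..n+1}. \<bar>poly R (x0 + real j * h)\<bar> \<le> M"
    proof
      fix j assume j: "j \<in> {1..n+1}"
      define y where "y = x0 + real j * h"
      have jh1: "real j * h \<le> 1" "h \<le> real j * h" using j h0 unfolding h_def by (auto simp: field_simps)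
      have yy: "-1 \<le> y" "y \<le> 1" "h/2 \<le> y" using jh1 e1' e0 h0 unfolding y_def x0_def by linarith+
      then have yin: "y \<in> {-1..1}" by simp
      have ylow: "h/2 \<le> \<bar>y\<bar>" using yy by linarith
      have "\<bar>y^3 * poly R y\<bar> = \<bar>(poly P y - f y) + (f y - e*y - y^2/2)\<bar>"
        using polyP'[of y] by simp
      also have "\<dots> \<le> \<bar>f y - poly P y\<bar> + \<bar>f y - e*y - y^2/2\<bar>" by linarith
      also have "\<dots> \<le> D + 1/2" using Dle[OF yin] fdev[of y] yin by fastforce
      finally have 1: "\<bar>y\<bar>^3 * \<bar>poly R y\<bar> \<le> D + 1/2" by (simp add: abs_mult power_abs)
      have "(h/2)^3 \<le> \<bar>y\<bar>^3" using ylow h0 by (intro power_mono) auto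
      then have "(h/2)^3 * \<bar>poly R y\<bar> \<le> D + 1/2"
        using 1 by (smt (verit) abs_ge_zero mult_right_mono)
      moreover have "(h/2)^3 = 1/(8*(real n+1)^3)" unfolding h_def by (simp add: power_divide power3_eq_cube algebra_simps)
      ultimately have hb: "(1/(8*(real n+1)^3)) * \<bar>poly R y\<bar> \<le> D + 1/2" by simp
      have cpos: "8*(real n+1)^3 > 0" by simp
      have "\<bar>poly R y\<bar> = (8*(real n+1)^3) * ((1/(8*(real n+1)^3)) * \<bar>poly R y\<bar>)"
        using cpos by simp
      also have "\<dots> \<le> (8*(real n+1)^3) * (D + 1/2)"
        using hb cpos by (intro mult_left_mono) auto
      finally show "\<bar>poly R y\<bar> \<le> M" unfolding M_def .
    qed
    have "\<bar>poly R x0\<bar> \<le> (2^(n+1) - 1) * M" by (rule fd_bound[OF degR Mb])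
    then have "poly R x0 \<le> K * (D + 1/2)" unfolding M_def K_def by (simp add: algebra_simps)
    then have "1 \<le> 16*e*(K*(D+1/2))" using Rx0 e0
      by (smt (verit) mult_left_mono)
    moreover have "16*e*K*(A+1) \<le> 1"
    proof -
      have pos: "16*K*(A+1) > 0" using K assms(2) by simp
      have "e * (16*K*(A+1)) \<le> 1" using e2 pos_le_divide_eq[OF pos] by simp
      then show ?thesis by (simp add: algebra_simps)
    qed
    ultimately have "16*e*K*(A+1) \<le> 16*e*K*(D+1/2)" by (simp add: algebra_simps)
    then have "A + 1 \<le> D + 1/2" using e0 K by simp
    moreover have "A * supnorm f2 \<le> A" using f2b assms(2) by (simp add: mult_left_le)
    ultimately show ?thesis unfolding D_def by simp
  qed
  show ?thesis using C2 fneg fpos main by blast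
qed

end
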